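(* Let $\delta_0=(\mathbf a_1,\mathbf a_2,\mathbf a_3)$ be an m-triangle of maximal area among m-triangles with the same moment of inertia, and let $\delta_1,\delta_2$ be degenerate (collinear) but nonzero m-triangles satisfying $\delta_0\times\delta_1=\delta_0\times\delta_2=0$. Then the angle $\psi$ between the lines spanned by $\delta_1$ and $\delta_2$ equals the distance between their shapes $\delta_1^\ast,\delta_2^\ast$ in the shape space $M^\ast\simeq S^2(1/2)$, namely $\psi=\frac12|\theta_2-\theta_1|$, where $\theta_i$ is the longitude of $\delta_i^\ast$ on the equator.
   Context: Masses $m_1,m_2,m_3>0$, $m_1+m_2+m_3=1$; an m-triangle is $(\mathbf a_1,\mathbf a_2,\mathbf a_3)$, $\mathbf a_i\in\mathbb R^3$, $\sum m_i\mathbf a_i=0$, with moment of inertia $I=\sum m_i|\mathbf a_i|^2$. For m-triangles $\mathbf X=(\mathbf a_i)$, $\mathbf Y=(\mathbf b_i)$, $\mathbf X\times\mathbf Y=\sum m_i\mathbf a_i\times\mathbf b_i$ (this vanishing is the zero angular momentum condition for the linear motion from $\mathbf X$ to $\mathbf Y$). The shape space $M^\ast$ consists of oriented m-triangles with $I=1$ modulo rotation; with the kinematic metric (induced from $\sum m_i|d\mathbf a_i|^2$ by zero angular momentum lifts) it is a round sphere of radius $1/2$ whose equator is the set of collinear shapes; $\theta$ is the longitude on it, and the spherical metric is $\frac14(d\varphi^2+\sin^2\varphi\,d\theta^2)$. The shape of a nonzero m-triangle is the shape of its rescaling to $I=1$. *)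

theory Defs
  imports "HOL-Analysis.Analysis" "HOL-Analysis.Cross3"
begin

type_synonym tri = "(real^3) \<times> (real^3) \<times> (real^3)"

definition is_mtri :: "real \<Rightarrow> real \<Rightarrow> real \<Rightarrow> tri \<Rightarrow> bool" where
  "is_mtri m1 m2 m3 X = (case X of (a1, a2, a3) \<Rightarrow>
      m1 *\<^sub>R a1 + m2 *\<^sub>R a2 + m3 *\<^sub>R a3 = 0)"

definition inertia :: "real \<Rightarrow> real \<Rightarrow> real \<Rightarrow> tri \<Rightarrow> real" where
  "inertia m1 m2 m3 X = (case X of (a1, a2, a3) \<Rightarrow>
      m1 * (norm a1)^2 + m2 * (norm a2)^2 + m3 * (norm a3)^2)"

definition tri_area :: "tri \<Rightarrow> real" where
  "tri_area X = (case X of (a1, a2, a3) \<Rightarrow> norm (cross3 (a2 - a1) (a3 - a1)) / 2)"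

definition mcross :: "real \<Rightarrow> real \<Rightarrow> real \<Rightarrow> tri \<Rightarrow> tri \<Rightarrow> real^3" where
  "mcross m1 m2 m3 X Y = (case X of (a1, a2, a3) \<Rightarrow> case Y of (b1, b2, b3) \<Rightarrow>
      m1 *\<^sub>R cross3 a1 b1 + m2 *\<^sub>R cross3 a2 b2 + m3 *\<^sub>R cross3 a3 b3)"

definition tri_collinear :: "tri \<Rightarrow> bool" where
  "tri_collinear X = (case X of (a1, a2, a3) \<Rightarrow> collinear {a1, a2, a3})"

definition tri_points :: "tri \<Rightarrow> (real^3) set" where
  "tri_points X = (case X of (a1, a2, a3) \<Rightarrow> {a1, a2, a3})"

definition max_area :: "real \<Rightarrow> real \<Rightarrow> real \<Rightarrow> tri \<Rightarrow> bool" where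
  "max_area m1 m2 m3 X = (is_mtri m1 m2 m3 X \<and>
      (\<forall>Y. is_mtri m1 m2 m3 Y \<and> inertia m1 m2 m3 Y = inertia m1 m2 m3 X
           \<longrightarrow> tri_area Y \<le> tri_area X))"

definition line_angle :: "tri \<Rightarrow> tri \<Rightarrow> real" where
  "line_angle X Y =
     (let u = (SOME u. u \<in> span (tri_points X) \<and> u \<noteq> 0);
          v = (SOME v. v \<in> span (tri_points Y) \<and> v \<noteq> 0)
      in arccos (\<bar>u \<bullet> v\<bar> / (norm u * norm v)))"

text \<open>Mass-weighted Jacobi vectors; then the moment of inertia equals
  |rho1|^2 + |rho2|^2 (total mass 1).\<close>
definition jac1 :: "real \<Rightarrow> real \<Rightarrow> real \<Rightarrow> tri \<Rightarrow> real^3" where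
  "jac1 m1 m2 m3 X = (case X of (a1, a2, a3) \<Rightarrow>
      sqrt (m1 * m2 / (m1 + m2)) *\<^sub>R (a2 - a1))"

definition jac2 :: "real \<Rightarrow> real \<Rightarrow> real \<Rightarrow> tri \<Rightarrow> real^3" where
  "jac2 m1 m2 m3 X = (case X of (a1, a2, a3) \<Rightarrow>
      sqrt ((m1 + m2) * m3) *\<^sub>R (a3 - (1 / (m1 + m2)) *\<^sub>R (m1 *\<^sub>R a1 + m2 *\<^sub>R a2)))"

text \<open>Equatorial part (w1, w2) of the Hopf map, as a complex number
  w1 + i w2; the shape sphere M* of radius 1/2 is the image of the normalised
  Hopf map (w1, w2, w3)/I, the equator being w3 = 0 (collinear shapes).\<close>
definition hopf_eq :: "real \<Rightarrow> real \<Rightarrow> real \<Rightarrow> tri \<Rightarrow> complex" where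
  "hopf_eq m1 m2 m3 X = Complex
      ((norm (jac1 m1 m2 m3 X))^2 - (norm (jac2 m1 m2 m3 X))^2)
      (2 * (jac1 m1 m2 m3 X \<bullet> jac2 m1 m2 m3 X))"

definition longitude :: "real \<Rightarrow> real \<Rightarrow> real \<Rightarrow> tri \<Rightarrow> real" where
  "longitude m1 m2 m3 X = Arg (hopf_eq m1 m2 m3 X)"

text \<open>Distance of two shapes on the equator of the sphere S^2(1/2):
  half the angle between the equatorial Hopf images.\<close>
definition eq_shape_dist :: "real \<Rightarrow> real \<Rightarrow> real \<Rightarrow> tri \<Rightarrow> tri \<Rightarrow> real" where
  "eq_shape_dist m1 m2 m3 X Y =
     (let z = hopf_eq m1 m2 m3 X; w = hopf_eq m1 m2 m3 Y
      in arccos ((Re z * Re w + Im z * Im w) / (cmod z * cmod w)) / 2)"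

definition circ_diff :: "real \<Rightarrow> real \<Rightarrow> real" where
  "circ_diff t1 t2 = min \<bar>t2 - t1\<bar> (2 * pi - \<bar>t2 - t1\<bar>)"

end

theory Submission
  imports Defs
begin



lemma gen_mtri: "m1 = u - m2 \<Longrightarrow> u \<noteq> 0 \<Longrightarrow> s \<noteq> 0 \<Longrightarrow> t \<noteq> 0 \<Longrightarrow>
  m1 *\<^sub>R ((-(m3/t)) *\<^sub>R q + (-(m2/(s*u))) *\<^sub>R p) +
  m2 *\<^sub>R ((-(m3/t)) *\<^sub>R q + (m1/(s*u)) *\<^sub>R p) + m3 *\<^sub>R ((u/t) *\<^sub>R q) = (0::real^3)"
  apply (simp add: vec_eq_iff) 
  apply (simp add: field_simps)
  done
lemma gen_jac1: "m1 = u - m2 \<Longrightarrow> u \<noteq> 0 \<Longrightarrow> s \<noteq> 0 \<Longrightarrow> 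
  s *\<^sub>R (((-(m3/t)) *\<^sub>R q + (m1/(s*u)) *\<^sub>R p) - ((-(m3/t)) *\<^sub>R q + (-(m2/(s*u))) *\<^sub>R p)) = (p::real^3)"
  apply (simp add: vec_eq_iff)
  apply (simp add: field_simps)
  done
lemma gen_jac2: "m1 = u - m2 \<Longrightarrow> u \<noteq> 0 \<Longrightarrow> s \<noteq> 0 \<Longrightarrow> t \<noteq> 0 \<Longrightarrow> m3 = 1 - u \<Longrightarrow>
  t *\<^sub>R ((u/t) *\<^sub>R q - (1/u) *\<^sub>R (m1 *\<^sub>R ((-(m3/t)) *\<^sub>R q + (-(m2/(s*u))) *\<^sub>R p) +
  m2 *\<^sub>R ((-(m3/t)) *\<^sub>R q + (m1/(s*u)) *\<^sub>R p))) = (q::real^3)"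
  apply (simp add: vec_eq_iff)
  apply (simp add: field_simps)
  done

lemma gen_rep: "m1 = u - m2 \<Longrightarrow> u \<noteq> 0 \<Longrightarrow> s \<noteq> 0 \<Longrightarrow> t \<noteq> 0 \<Longrightarrow> m3 = 1 - u \<Longrightarrow>
  m1 *\<^sub>R a1 + m2 *\<^sub>R a2 + m3 *\<^sub>R a3 = (0::real^3) \<Longrightarrow>
  p = s *\<^sub>R (a2 - a1) \<Longrightarrow> q = t *\<^sub>R (a3 - (1/u) *\<^sub>R (m1 *\<^sub>R a1 + m2 *\<^sub>R a2)) \<Longrightarrow>
  a1 = (-(m3/t)) *\<^sub>R q + (-(m2/(s*u))) *\<^sub>R p \<and> a2 = (-(m3/t)) *\<^sub>R q + (m1/(s*u)) *\<^sub>R p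
  \<and> a3 = (u/t) *\<^sub>R q"
proof -
  assume h: "m1 = u - m2" "u \<noteq> 0" "s \<noteq> 0" "t \<noteq> 0" "m3 = 1 - u"
    "m1 *\<^sub>R a1 + m2 *\<^sub>R a2 + m3 *\<^sub>R a3 = (0::real^3)"
    "p = s *\<^sub>R (a2 - a1)" "q = t *\<^sub>R (a3 - (1/u) *\<^sub>R (m1 *\<^sub>R a1 + m2 *\<^sub>R a2))"
  have c: "\<And>i. (u - m2) * a1$i + m2 * a2$i + (1-u) * a3$i = 0"
    using h(6) unfolding h(1) h(5) by (simp add: vec_eq_iff)
  show ?thesis unfolding h(7,8) using h(2,3,4) unfolding h(1) h(5)
    apply (simp add: vec_eq_iff)
    apply (simp add: field_simps)
    apply (intro conjI allI)
    subgoal for i using c[of i] by algebra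
    subgoal for i using c[of i] by algebra
    done
qed

lemma gen_bilin:
  fixes p q p' q' :: "real^3"
  shows "m1 *\<^sub>R (cross3 (al *\<^sub>R q + b1 *\<^sub>R p) (al *\<^sub>R q' + b1 *\<^sub>R p'))
    + m2 *\<^sub>R (cross3 (al *\<^sub>R q + b2 *\<^sub>R p) (al *\<^sub>R q' + b2 *\<^sub>R p'))
    + m3 *\<^sub>R (cross3 (g *\<^sub>R q) (g *\<^sub>R q'))
   = (m1*b1^2+m2*b2^2) *\<^sub>R (cross3 p p') + ((m1+m2)*al^2+m3*g^2) *\<^sub>R (cross3 q q')
     + (al*(m1*b1+m2*b2)) *\<^sub>R (cross3 q p' + cross3 p q')"
  by (simp add: cross_add_left cross_add_right cross_mult_left cross_mult_right vec_eq_iff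
     algebra_simps power2_eq_square)

lemma gen_inertia:
  fixes p q :: "real^3"
  shows "m1 * (norm (al *\<^sub>R q + b1 *\<^sub>R p))^2
    + m2 * (norm (al *\<^sub>R q + b2 *\<^sub>R p))^2
    + m3 * (norm (g *\<^sub>R q))^2
   = (m1*b1^2+m2*b2^2) * (norm p)^2 + ((m1+m2)*al^2+m3*g^2) * (norm q)^2
     + 2*(al*(m1*b1+m2*b2)) * (p \<bullet> q)"
  unfolding power2_norm_eq_inner
  by (simp add: inner_add_left inner_add_right algebra_simps
     power2_eq_square inner_commute)

lemma gen_area:
  fixes p q :: "real^3"
  shows "cross3 ((al *\<^sub>R q + b2 *\<^sub>R p) - (al *\<^sub>R q + b1 *\<^sub>R p)) (g *\<^sub>R q - (al *\<^sub>R q + b1 *\<^sub>R p))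
     = ((b2 - b1)*(g - al)) *\<^sub>R (cross3 p q)"
  by (simp add: cross_add_left cross_add_right cross_mult_left cross_mult_right vec_eq_iff
     algebra_simps Cross3.left_diff_distrib Cross3.right_diff_distrib cross_skew[of q p])



lemma trig1: fixes c :: real assumes "-1 \<le> c" "c \<le> 1"
  shows "arccos \<bar>c\<bar> = arccos (2*c^2 - 1) / 2"
proof -
  define al where "al = arccos \<bar>c\<bar>"
  have a0: "0 \<le> al" "al \<le> pi/2" unfolding al_def using assms arccos_le_pi2[of "\<bar>c\<bar>"]
    arccos_lbound[of "\<bar>c\<bar>"] by auto
  have "cos al = \<bar>c\<bar>" unfolding al_def using assms by (simp add: cos_arccos)
  then have "cos (2*al) = 2*c^2 - 1" by (simp add: cos_double_cos)
  moreover have "arccos (cos (2*al)) = 2*al" using a0 by (intro arccos_cos) auto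
  ultimately have "arccos (2*c^2 - 1) = 2*al" by simp
  then show ?thesis unfolding al_def by simp
qed

lemma trig2: fixes a b :: real
  assumes "-pi < a" "a \<le> pi" "-pi < b" "b \<le> pi"
  shows "arccos (cos (a - b)) = circ_diff a b"
proof -
  define d where "d = \<bar>b - a\<bar>"
  have cd: "cos (a - b) = cos d" unfolding d_def
    by (metis abs_minus_commute cos_abs_real)
  have d0: "0 \<le> d" "d < 2*pi" unfolding d_def using assms by auto
  show ?thesis
  proof (cases "d \<le> pi")
    case True
    then show ?thesis unfolding cd circ_diff_def d_def[symmetric] using d0
      by (simp add: arccos_cos)
  next
    case False
    have "cos d = cos (2*pi - d)" by (simp add: cos_diff)
    moreover have "arccos (cos (2*pi - d)) = 2*pi - d" using d0 False by (intro arccos_cos) auto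
    ultimately show ?thesis unfolding cd circ_diff_def d_def[symmetric] using d0 False
      by simp
  qed
qed

lemma Arg_parts:
  shows "Re z = cmod z * cos (Arg z)" "Im z = cmod z * sin (Arg z)"
  by (metis Re_rcis rcis_cmod_Arg) (metis Im_rcis rcis_cmod_Arg)

lemma final_trig:
  fixes x1 x2 y1 y2 K K' :: real
  assumes x: "x1^2 + x2^2 > 0" and y: "y1^2 + y2^2 > 0" and K: "K > 0" "K' > 0"
    and z: "z = Complex (K*(x1^2 - x2^2)) (K*(2*x1*x2))"
    and w: "w = Complex (K'*(y1^2 - y2^2)) (K'*(2*y1*y2))"
  defines "c \<equiv> (x1*y1 + x2*y2) / (sqrt (x1^2+x2^2) * sqrt (y1^2+y2^2))"
  shows "arccos \<bar>c\<bar> = arccos ((Re z * Re w + Im z * Im w) / (cmod z * cmod w)) / 2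
    \<and> arccos \<bar>c\<bar> = circ_diff (Arg z) (Arg w) / 2"
proof -
  have cz: "cmod z = K * (x1^2+x2^2)"
  proof -
    have "(cmod z)^2 = (K * (x1^2+x2^2))^2" unfolding z cmod_power2
      by (simp add: power2_eq_square algebra_simps)
    then show ?thesis using x K by (simp add: power2_eq_iff_nonneg)
  qed
  have cw: "cmod w = K' * (y1^2+y2^2)"
  proof -
    have "(cmod w)^2 = (K' * (y1^2+y2^2))^2" unfolding w cmod_power2
      by (simp add: power2_eq_square algebra_simps)
    then show ?thesis using y K by (simp add: power2_eq_iff_nonneg)
  qed
  have c2: "c^2 = (x1*y1 + x2*y2)^2 / ((x1^2+x2^2) * (y1^2+y2^2))"
    unfolding c_def using x y by (simp add: power_divide power_mult_distrib)
  have cs: "(x1*y1 + x2*y2)^2 \<le> (x1^2+x2^2) * (y1^2+y2^2)"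
  proof -
    have "(x1*y1 + x2*y2)^2 + (x1*y2 - x2*y1)^2 = (x1^2+x2^2) * (y1^2+y2^2)"
      by (simp add: power2_eq_square algebra_simps)
    then show ?thesis by (metis le_add_same_cancel1 zero_le_power2)
  qed
  then have "c^2 \<le> 1" unfolding c2 using x y by (simp add: divide_le_eq_1)
  then have "\<bar>c\<bar> \<le> 1" by (simp add: abs_square_le_1)
  then have cb: "-1 \<le> c" "c \<le> 1" by auto
  have key: "(Re z * Re w + Im z * Im w) / (cmod z * cmod w) = 2*c^2 - 1"
  proof -
    have N: "(x1^2-x2^2)*(y1^2-y2^2) + (2*x1*x2)*(2*y1*y2) = 2*(x1*y1+x2*y2)^2 - (x1^2+x2^2)*(y1^2+y2^2)"
      by (simp add: power2_eq_square algebra_simps)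
    have "Re z * Re w + Im z * Im w = (K*K') * ((x1^2-x2^2)*(y1^2-y2^2) + (2*x1*x2)*(2*y1*y2))"
      unfolding z w by (simp add: algebra_simps)
    also have "\<dots> = (K*K') * (2*(x1*y1+x2*y2)^2 - (x1^2+x2^2)*(y1^2+y2^2))" by (simp only: N)
    finally have e: "Re z * Re w + Im z * Im w = (K*K') * (2*(x1*y1+x2*y2)^2 - (x1^2+x2^2)*(y1^2+y2^2))" .
    have xx: "x1^2+x2^2 \<noteq> 0" "y1^2+y2^2 \<noteq> 0" "K \<noteq> 0" "K' \<noteq> 0" using x y K by auto
    have g: "\<And>X Y P::real. X \<noteq> 0 \<Longrightarrow> Y \<noteq> 0 \<Longrightarrow> 
       (K*K') * (2*P - X*Y) / ((K*X) * (K'*Y)) = 2*(P/(X*Y)) - 1"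
      using xx(3,4) by (simp add: field_simps)
    show ?thesis unfolding e cz cw c2 by (rule g[OF xx(1,2)])
  qed
  have z0: "z \<noteq> 0" using cz x K by auto
  have w0: "w \<noteq> 0" using cw y K by auto
  have "Re z * Re w + Im z * Im w = (cmod z * cmod w) * cos (Arg z - Arg w)"
    by (subst (1 2) Arg_parts(1), subst (1 2) Arg_parts(2)) (simp add: cos_diff algebra_simps)
  then have cc: "(Re z * Re w + Im z * Im w) / (cmod z * cmod w) = cos (Arg z - Arg w)"
    using z0 w0 by simp
  have t2: "arccos (cos (Arg z - Arg w)) = circ_diff (Arg z) (Arg w)"
    using Arg_bounded[of z] Arg_bounded[of w] by (intro trig2) auto
  show ?thesis using trig1[OF cb] key cc t2 by simp
qed



lemma trip1: "(q::real^3) \<bullet> cross3 p p1 = - (p1 \<bullet> cross3 p q)"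
  by (simp add: cross3_simps forall_3)
lemma trip2: "(p::real^3) \<bullet> cross3 q q1 = q1 \<bullet> cross3 p q"
  by (simp add: cross3_simps forall_3)
lemma lagr: "cross3 a b \<bullet> cross3 c (d::real^3) = (a \<bullet> c) * (b \<bullet> d) - (a \<bullet> d) * (b \<bullet> c)"
  by (simp add: cross3_simps forall_3)
lemma bac1: "cross3 (cross3 a b) (c::real^3) = (a \<bullet> c) *\<^sub>R b - (b \<bullet> c) *\<^sub>R a"
  by (simp add: cross3_simps forall_3)
lemma bac2: "cross3 a (cross3 a (w::real^3)) = (a \<bullet> w) *\<^sub>R a - (a \<bullet> a) *\<^sub>R w"
  by (simp add: cross3_simps forall_3)

lemma expand:
  fixes p q w :: "real^3"
  assumes "p \<bullet> q = 0" "p \<bullet> p = R" "q \<bullet> q = R" 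
  shows "(R*R) *\<^sub>R w = (R*(p \<bullet> w)) *\<^sub>R p + (R*(q \<bullet> w)) *\<^sub>R q + (cross3 p q \<bullet> w) *\<^sub>R cross3 p q"
proof -
  have n: "cross3 p q \<bullet> cross3 p q = R*R" using assms by (simp add: lagr inner_commute)
  have "cross3 (cross3 p q) (cross3 (cross3 p q) w) = (cross3 p q \<bullet> w) *\<^sub>R cross3 p q - (R*R) *\<^sub>R w"
    using bac2 n by simp
  moreover have "cross3 (cross3 p q) (cross3 (cross3 p q) w) = - (R*(p \<bullet> w)) *\<^sub>R p - (R*(q \<bullet> w)) *\<^sub>R q"
    using assms by (simp add: bac1 cross_mult_right Cross3.right_diff_distrib inner_commute
       scaleR_diff_right algebra_simps)
  ultimately show ?thesis by (simp add: algebra_simps)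
qed



lemma coef_vec:
  fixes p q :: "real^3"
  assumes "c*x1*x1 = A" "c*x1*x2 = B" "c*x2*x2 = D"
  shows "(c*x1) *\<^sub>R (x1 *\<^sub>R p + x2 *\<^sub>R q) = A *\<^sub>R p + B *\<^sub>R q"
        "(c*x2) *\<^sub>R (x1 *\<^sub>R p + x2 *\<^sub>R q) = B *\<^sub>R p + D *\<^sub>R q"
  using assms by (simp_all add: scaleR_add_right flip: assms)

lemma rank1:
  fixes a b d :: real
  assumes "a*d = b*b" "a \<noteq> 0 \<or> b \<noteq> 0 \<or> d \<noteq> 0"
  shows "\<exists>x1 x2 s. x1^2+x2^2 > 0 \<and> s \<noteq> 0 \<and> s*x1*x1 = a \<and> s*x1*x2 = b \<and> s*x2*x2 = d"
proof -
  consider "a > 0" | "a < 0" | "a = 0" by linarith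
  then show ?thesis
  proof cases
    case 1
    have sq: "sqrt a * sqrt a = a" using 1 by simp
    have "sqrt a > 0" using 1 by simp
    have g1: "(sqrt a)^2 + (b / sqrt a)^2 > 0" using 1 by (simp add: add_pos_nonneg)
    have g2: "1 * sqrt a * (b / sqrt a) = b" using \<open>sqrt a > 0\<close> by simp
    have g3: "1 * (b / sqrt a) * (b / sqrt a) = d" using sq 1 assms(1)
      by (simp add: divide_simps) (metis mult.commute)
    show ?thesis using g1 g2 g3 sq by (intro exI[of _ "sqrt a"] exI[of _ "b / sqrt a"] exI[of _ 1]) simp
  next
    case 2
    have sq: "sqrt (-a) * sqrt (-a) = -a" using 2 by simp
    have "sqrt (-a) > 0" using 2 by simp
    have g1: "(sqrt (-a))^2 + (- b / sqrt (-a))^2 > 0" using 2 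
      by (intro add_pos_nonneg) auto
    have g2: "-1 * sqrt (-a) * (- b / sqrt (-a)) = b" using \<open>sqrt (-a) > 0\<close> by simp
    have g3: "-1 * (- b / sqrt (-a)) * (- b / sqrt (-a)) = d" using sq 2 assms(1)
      by (simp add: divide_simps) (metis mult.commute mult_minus_left)
    have g0: "-1 * sqrt (-a) * sqrt (-a) = a" using sq by simp
    show ?thesis using g0 g1 g2 g3 by (intro exI[of _ "sqrt (-a)"] exI[of _ "- b / sqrt (-a)"] exI[of _ "-1"]) simp
  next
    case 3
    then have b: "b = 0" using assms(1) by simp
    then have "d \<noteq> 0" using assms(2) 3 by simp
    then consider "d > 0" | "d < 0" by linarith
    then show ?thesis
    proof cases
      case 1
      show ?thesis
        apply (rule exI[of _ 0], rule exI[of _ "sqrt d"], rule exI[of _ 1])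
        using 1 3 b by simp
    next
      case 2
      show ?thesis
        apply (rule exI[of _ 0], rule exI[of _ "sqrt (-d)"], rule exI[of _ "-1"])
        using 2 3 b by simp
    qed
  qed
qed



lemma struct:
  fixes p q p1 q1 :: "real^3"
  assumes o: "p \<bullet> q = 0" "p \<bullet> p = R" "q \<bullet> q = R" "R > 0"
    and mc: "cross3 p p1 + cross3 q q1 = 0" and cr: "cross3 p1 q1 = 0" and nz: "p1 \<noteq> 0 \<or> q1 \<noteq> 0"
  shows "\<exists>x1 x2 c. x1^2+x2^2 > 0 \<and> c \<noteq> 0 \<and> p1 = (c*x1) *\<^sub>R (x1 *\<^sub>R p + x2 *\<^sub>R q)
           \<and> q1 = (c*x2) *\<^sub>R (x1 *\<^sub>R p + x2 *\<^sub>R q)"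
proof -
  define E where "E = cross3 p q"
  have "q \<bullet> (cross3 p p1 + cross3 q q1) = 0" using mc by simp
  then have h1: "p1 \<bullet> E = 0" unfolding E_def by (simp add: inner_add_right trip1[of q p p1] dot_cross_self)
  have "p \<bullet> (cross3 p p1 + cross3 q q1) = 0" using mc by simp
  then have h2: "q1 \<bullet> E = 0" unfolding E_def by (simp add: inner_add_right trip2[of p q q1] dot_cross_self)
  have "E \<bullet> (cross3 p p1 + cross3 q q1) = 0" using mc by simp
  then have "R * (q \<bullet> p1) - R * (p \<bullet> q1) = 0" unfolding E_def
    using o by (simp add: inner_add_right lagr inner_commute)
  then have h3: "p \<bullet> q1 = q \<bullet> p1" using o(4) by simp
  define a where "a = p \<bullet> p1"
  define b where "b = q \<bullet> p1"
  define d where "d = q \<bullet> q1"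
  have e1: "p1 = (a/R) *\<^sub>R p + (b/R) *\<^sub>R q"
  proof -
    have "(R*R) *\<^sub>R p1 = (R*a) *\<^sub>R p + (R*b) *\<^sub>R q"
      using expand[OF o(1,2,3), of p1] h1 unfolding a_def b_def E_def by (simp add: inner_commute)
    then have "(1/(R*R)) *\<^sub>R ((R*R) *\<^sub>R p1) = (1/(R*R)) *\<^sub>R ((R*a) *\<^sub>R p + (R*b) *\<^sub>R q)" by simp
    then show ?thesis using o(4) by (simp add: scaleR_add_right)
  qed
  have e2: "q1 = (b/R) *\<^sub>R p + (d/R) *\<^sub>R q"
  proof -
    have "(R*R) *\<^sub>R q1 = (R*b) *\<^sub>R p + (R*d) *\<^sub>R q"
      using expand[OF o(1,2,3), of q1] h2 h3 unfolding b_def d_def E_def by (simp add: inner_commute)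
    then have "(1/(R*R)) *\<^sub>R ((R*R) *\<^sub>R q1) = (1/(R*R)) *\<^sub>R ((R*b) *\<^sub>R p + (R*d) *\<^sub>R q)" by simp
    then show ?thesis using o(4) by (simp add: scaleR_add_right)
  qed
  have "cross3 p1 q1 = ((a/R)*(d/R) - (b/R)*(b/R)) *\<^sub>R E"
    unfolding e1 e2 E_def
    by (simp add: cross_add_left cross_add_right cross_mult_left cross_mult_right 
        cross_skew[of q p] algebra_simps)
  moreover have "E \<noteq> 0" proof
    assume "E = 0" then have "E \<bullet> E = 0" by simp
    moreover have "E \<bullet> E = R*R" unfolding E_def using o by (simp add: lagr inner_commute)
    ultimately show False using o(4) by simp
  qed
  ultimately have "(a/R)*(d/R) - (b/R)*(b/R) = 0" using cr by simp
  then have ad: "a*d = b*b" using o(4) by (simp add: field_simps)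
  have nz2: "a \<noteq> 0 \<or> b \<noteq> 0 \<or> d \<noteq> 0" using nz e1 e2 by auto
  obtain x1 x2 s where xs: "x1^2+x2^2 > 0" "s \<noteq> 0" "s*x1*x1 = a" "s*x1*x2 = b" "s*x2*x2 = d"
    using rank1[OF ad nz2] by blast
  have "(s/R)*x1*x1 = a/R" "(s/R)*x1*x2 = b/R" "(s/R)*x2*x2 = d/R" using xs
    by (simp_all add: field_simps)
  note cv = coef_vec[OF this, of p q]
  show ?thesis
    apply (rule exI[of _ x1], rule exI[of _ x2], rule exI[of _ "s/R"])
    using xs(1,2) o(4) cv e1 e2 by simp
qed



definition Tm :: "real\<Rightarrow>real\<Rightarrow>real\<Rightarrow>real^3\<Rightarrow>real^3\<Rightarrow>tri" where
"Tm m1 m2 m3 p q = 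
 ( (-(m3/sqrt((m1+m2)*m3))) *\<^sub>R q + (-(m2/(sqrt(m1*m2/(m1+m2))*(m1+m2)))) *\<^sub>R p,
   (-(m3/sqrt((m1+m2)*m3))) *\<^sub>R q + (m1/(sqrt(m1*m2/(m1+m2))*(m1+m2))) *\<^sub>R p,
   ((m1+m2)/sqrt((m1+m2)*m3)) *\<^sub>R q)"

lemma coefs:
  fixes m1 m2 m3 :: real
  assumes pos: "m1 > 0" "m2 > 0" "m3 > 0" and sum1: "m1 + m2 + m3 = 1"
  defines "s \<equiv> sqrt(m1*m2/(m1+m2))" and "t \<equiv> sqrt((m1+m2)*m3)"
  shows "m1*(-(m2/(s*(m1+m2))))^2 + m2*(m1/(s*(m1+m2)))^2 = 1"
    "(m1+m2)*(-(m3/t))^2 + m3*((m1+m2)/t)^2 = 1"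
    "(-(m3/t))*(m1*(-(m2/(s*(m1+m2)))) + m2*(m1/(s*(m1+m2)))) = 0"
    "(m1/(s*(m1+m2)) - (-(m2/(s*(m1+m2)))))*((m1+m2)/t - (-(m3/t))) = 1/(s*t)"
    "s > 0" "t > 0"
proof -
  define u where "u = m1 + m2"
  have u: "u > 0" using pos u_def by simp
  have ss: "s^2 = m1*m2/u" unfolding s_def u_def using pos by simp
  have tt: "t^2 = u*m3" unfolding t_def u_def using pos by simp
  show sp: "s > 0" "t > 0" unfolding s_def t_def using pos by simp_all
  have m3: "m3 = 1 - u" using sum1 u_def by simp
  show "m1*(-(m2/(s*(m1+m2))))^2 + m2*(m1/(s*(m1+m2)))^2 = 1"
  proof -
    have "m1*(-(m2/(s*u)))^2 + m2*(m1/(s*u))^2 = (m1*m2*u)/(s^2*u^2)"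
    proof -
      have m1: "m1 = u - m2" using u_def by simp
      show ?thesis using sp u unfolding m1 by (simp add: power_divide power_mult_distrib field_simps power2_eq_square)
    qed
    also have "\<dots> = 1" unfolding ss using u pos by (simp add: field_simps power2_eq_square)
    finally show ?thesis unfolding u_def .
  qed
  show "(m1+m2)*(-(m3/t))^2 + m3*((m1+m2)/t)^2 = 1"
    unfolding u_def[symmetric] m3 using sp u tt unfolding m3
    by (simp add: power_divide power_mult_distrib field_simps power2_eq_square)
  show "(-(m3/t))*(m1*(-(m2/(s*(m1+m2)))) + m2*(m1/(s*(m1+m2)))) = 0"
    by (simp add: field_simps)
  show "(m1/(s*(m1+m2)) - (-(m2/(s*(m1+m2)))))*((m1+m2)/t - (-(m3/t))) = 1/(s*t)"
  proof -
    have m1: "m1 = u - m2" using u_def by simp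
    show ?thesis unfolding u_def[symmetric] m3 unfolding m1 using sp u 
    by (simp add: field_simps)
  qed
qed

lemma T_props:
  fixes m1 m2 m3 :: real
  assumes pos: "m1 > 0" "m2 > 0" "m3 > 0" and sum1: "m1 + m2 + m3 = 1"
  shows "is_mtri m1 m2 m3 (Tm m1 m2 m3 p q)"
    "jac1 m1 m2 m3 (Tm m1 m2 m3 p q) = p"
    "jac2 m1 m2 m3 (Tm m1 m2 m3 p q) = q"
    "inertia m1 m2 m3 (Tm m1 m2 m3 p q) = (norm p)^2 + (norm q)^2"
    "mcross m1 m2 m3 (Tm m1 m2 m3 p q) (Tm m1 m2 m3 p' q') = cross3 p p' + cross3 q q'"
    "tri_area (Tm m1 m2 m3 p q) = norm (cross3 p q) / (2 * (sqrt(m1*m2/(m1+m2)) * sqrt((m1+m2)*m3)))"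
proof -
  note c = coefs[OF pos sum1]
  have u: "m1 + m2 \<noteq> 0" using pos by simp
  have m1: "m1 = m1 + m2 - m2" by simp
  have m3: "m3 = 1 - (m1 + m2)" using sum1 by simp
  show "is_mtri m1 m2 m3 (Tm m1 m2 m3 p q)"
    unfolding is_mtri_def Tm_def prod.case
    by (rule gen_mtri[OF m1 u]) (use c(5,6) in auto)
  show "jac1 m1 m2 m3 (Tm m1 m2 m3 p q) = p"
    unfolding jac1_def Tm_def prod.case
    by (rule gen_jac1[OF m1 u]) (use c(5,6) in auto)
  show "jac2 m1 m2 m3 (Tm m1 m2 m3 p q) = q"
    unfolding jac2_def Tm_def prod.case
    by (rule gen_jac2[OF m1 u _ _ m3]) (use c(5,6) in auto)
  show "inertia m1 m2 m3 (Tm m1 m2 m3 p q) = (norm p)^2 + (norm q)^2"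
    unfolding inertia_def Tm_def prod.case gen_inertia c(1,2,3) by simp
  show "mcross m1 m2 m3 (Tm m1 m2 m3 p q) (Tm m1 m2 m3 p' q') = cross3 p p' + cross3 q q'"
    unfolding mcross_def Tm_def prod.case gen_bilin c(1,2,3) by simp
  show "tri_area (Tm m1 m2 m3 p q) = norm (cross3 p q) / (2 * (sqrt(m1*m2/(m1+m2)) * sqrt((m1+m2)*m3)))"
    unfolding tri_area_def Tm_def prod.case gen_area c(4) using c(5,6) by simp
qed

lemma T_rep:
  fixes m1 m2 m3 :: real
  assumes pos: "m1 > 0" "m2 > 0" "m3 > 0" and sum1: "m1 + m2 + m3 = 1"
    and X: "is_mtri m1 m2 m3 X"
  shows "X = Tm m1 m2 m3 (jac1 m1 m2 m3 X) (jac2 m1 m2 m3 X)"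
proof -
  note c = coefs[OF pos sum1]
  have u: "m1 + m2 \<noteq> 0" using pos by simp
  have m1: "m1 = m1 + m2 - m2" by simp
  have m3: "m3 = 1 - (m1 + m2)" using sum1 by simp
  obtain a1 a2 a3 where Xa: "X = (a1, a2, a3)" by (cases X) auto
  have h: "m1 *\<^sub>R a1 + m2 *\<^sub>R a2 + m3 *\<^sub>R a3 = 0" using X unfolding Xa is_mtri_def by simp
  note g = gen_rep[OF m1 u _ _ m3 h, of "sqrt(m1*m2/(m1+m2))" "sqrt((m1+m2)*m3)" "jac1 m1 m2 m3 X" "jac2 m1 m2 m3 X"]
  show ?thesis using g c(5,6) unfolding Xa Tm_def jac1_def jac2_def prod.case by auto
qed




lemma coll_cross:
  assumes "collinear {a1, a2, a3::real^3}"
  shows "cross3 (a2 - a1) (a3 - a1) = 0"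
proof -
  obtain u where u: "\<forall>x\<in>{a1,a2,a3}. \<forall>y\<in>{a1,a2,a3}. \<exists>c. x - y = c *\<^sub>R u"
    using assms unfolding collinear_def by blast
  obtain c1 where c1: "a2 - a1 = c1 *\<^sub>R u" using u by blast
  obtain c2 where c2: "a3 - a1 = c2 *\<^sub>R u" using u by blast
  show ?thesis unfolding c1 c2 by (simp add: cross_mult_left cross_mult_right)
qed

lemma Tm_zero: "Tm m1 m2 m3 0 0 = (0,0,0)" unfolding Tm_def by simp

lemma per_tri:
  fixes m1 m2 m3 :: real and p q :: "real^3" and d :: tri
  assumes pos: "m1 > 0" "m2 > 0" "m3 > 0" and sum1: "m1 + m2 + m3 = 1"
    and o: "p \<bullet> q = 0" "p \<bullet> p = R" "q \<bullet> q = R" "R > 0"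
    and d: "is_mtri m1 m2 m3 d" "tri_collinear d" "d \<noteq> (0,0,0)"
    and mc: "mcross m1 m2 m3 (Tm m1 m2 m3 p q) d = 0"
  shows "\<exists>x1 x2 c. x1^2+x2^2 > 0 \<and> c \<noteq> 0 \<and>
     jac1 m1 m2 m3 d = (c*x1) *\<^sub>R (x1 *\<^sub>R p + x2 *\<^sub>R q) \<and>
     jac2 m1 m2 m3 d = (c*x2) *\<^sub>R (x1 *\<^sub>R p + x2 *\<^sub>R q) \<and>
     (\<forall>w\<in>span (tri_points d). \<exists>k. w = k *\<^sub>R (x1 *\<^sub>R p + x2 *\<^sub>R q)) \<and>
     (\<exists>w. w \<in> span (tri_points d) \<and> w \<noteq> 0)"
proof -
  define p1 where "p1 = jac1 m1 m2 m3 d"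
  define q1 where "q1 = jac2 m1 m2 m3 d"
  have dr: "d = Tm m1 m2 m3 p1 q1" unfolding p1_def q1_def by (rule T_rep[OF pos sum1 d(1)])
  note TP = T_props[OF pos sum1]
  have mc1: "cross3 p p1 + cross3 q q1 = 0" using mc unfolding dr TP(5) .
  obtain a1 a2 a3 where da: "d = (a1,a2,a3)" by (cases d) auto
  have "cross3 (a2 - a1) (a3 - a1) = 0" using d(2) unfolding da tri_collinear_def
    by (simp add: coll_cross)
  then have "tri_area d = 0" unfolding da tri_area_def by simp
  then have "norm (cross3 p1 q1) = 0" unfolding dr TP(6) using coefs(5,6)[OF pos sum1] pos by simp
  then have cr: "cross3 p1 q1 = 0" by simp
  have nz: "p1 \<noteq> 0 \<or> q1 \<noteq> 0" using d(3) dr Tm_zero by auto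
  obtain x1 x2 c where xc: "x1^2+x2^2 > 0" "c \<noteq> 0" "p1 = (c*x1) *\<^sub>R (x1 *\<^sub>R p + x2 *\<^sub>R q)"
    "q1 = (c*x2) *\<^sub>R (x1 *\<^sub>R p + x2 *\<^sub>R q)"
    using struct[OF o mc1 cr nz] by blast
  define v where "v = x1 *\<^sub>R p + x2 *\<^sub>R q"
  have pts: "tri_points d \<subseteq> span {v}"
  proof -
    have "tri_points d = {fst (Tm m1 m2 m3 p1 q1), fst (snd (Tm m1 m2 m3 p1 q1)), snd (snd (Tm m1 m2 m3 p1 q1))}"
      using dr unfolding tri_points_def by (simp add: case_prod_beta)
    also have "\<dots> \<subseteq> range (\<lambda>k. k *\<^sub>R v)"
      unfolding Tm_def xc(3,4) v_def[symmetric]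
      apply (simp add: image_iff)
      apply (intro conjI)
      apply (metis scaleR_left_diff_distrib scaleR_minus_left)
      apply (metis scaleR_left_diff_distrib)
      done
    finally show ?thesis by (simp add: span_singleton)
  qed
  have sp: "\<forall>w\<in>span (tri_points d). \<exists>k. w = k *\<^sub>R v"
  proof
    fix w assume "w \<in> span (tri_points d)"
    then have "w \<in> span {v}" using span_minimal[OF pts subspace_span] by blast
    then show "\<exists>k. w = k *\<^sub>R v" by (auto simp: span_singleton)
  qed
  have ex: "\<exists>w. w \<in> span (tri_points d) \<and> w \<noteq> 0"
  proof -
    have "a1 \<noteq> 0 \<or> a2 \<noteq> 0 \<or> a3 \<noteq> 0" using d(3) da by auto
    then show ?thesis unfolding da tri_points_def by (auto intro: span_base)
  qed
  show ?thesis using xc sp ex unfolding p1_def q1_def v_def by blast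
qed




lemma angle_eq:
  fixes p q :: "real^3"
  assumes o: "p \<bullet> q = 0" "p \<bullet> p = R" "q \<bullet> q = R" "R > 0"
    and x: "x1^2+x2^2 > 0" and y: "y1^2+y2^2 > 0" and k: "k1 \<noteq> 0" "k2 \<noteq> 0"
  shows "\<bar>(k1 *\<^sub>R (x1 *\<^sub>R p + x2 *\<^sub>R q)) \<bullet> (k2 *\<^sub>R (y1 *\<^sub>R p + y2 *\<^sub>R q))\<bar>
     / (norm (k1 *\<^sub>R (x1 *\<^sub>R p + x2 *\<^sub>R q)) * norm (k2 *\<^sub>R (y1 *\<^sub>R p + y2 *\<^sub>R q)))
   = \<bar>(x1*y1 + x2*y2) / (sqrt (x1^2+x2^2) * sqrt (y1^2+y2^2))\<bar>"
proof -
  have ip: "(x1 *\<^sub>R p + x2 *\<^sub>R q) \<bullet> (y1 *\<^sub>R p + y2 *\<^sub>R q) = R * (x1*y1 + x2*y2)" for x1 x2 y1 y2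
    using o by (simp add: inner_add_left inner_add_right inner_commute algebra_simps)
  have nv: "norm (x1 *\<^sub>R p + x2 *\<^sub>R q) = sqrt R * sqrt (x1^2+x2^2)" for x1 x2
    unfolding norm_eq_sqrt_inner ip by (simp add: power2_eq_square real_sqrt_mult)
  have sR: "sqrt R * sqrt R = R" using o(4) by simp
  have sR2: "sqrt R * (sqrt R * z) = R * z" for z using sR by (simp add: mult.assoc[symmetric])
  have "\<bar>(k1 *\<^sub>R (x1 *\<^sub>R p + x2 *\<^sub>R q)) \<bullet> (k2 *\<^sub>R (y1 *\<^sub>R p + y2 *\<^sub>R q))\<bar>
     / (norm (k1 *\<^sub>R (x1 *\<^sub>R p + x2 *\<^sub>R q)) * norm (k2 *\<^sub>R (y1 *\<^sub>R p + y2 *\<^sub>R q)))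
    = (\<bar>k1\<bar>*\<bar>k2\<bar>*R*\<bar>x1*y1 + x2*y2\<bar>) / (\<bar>k1\<bar>*\<bar>k2\<bar>*(sqrt R * sqrt R) * (sqrt (x1^2+x2^2) * sqrt (y1^2+y2^2)))"
    unfolding inner_scaleR_left inner_scaleR_right ip norm_scaleR nv using o(4) 
    by (simp add: abs_mult mult_ac sR2)
  also have "\<dots> = \<bar>x1*y1 + x2*y2\<bar> / (sqrt (x1^2+x2^2) * sqrt (y1^2+y2^2))"
    unfolding sR using k o(4) by simp
  also have "\<dots> = \<bar>(x1*y1 + x2*y2) / (sqrt (x1^2+x2^2) * sqrt (y1^2+y2^2))\<bar>"
    by (simp add: abs_div_pos)
  finally show ?thesis .
qed

lemma hopf_form:
  fixes p q :: "real^3"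
  assumes o: "p \<bullet> q = 0" "p \<bullet> p = R" "q \<bullet> q = R" "R > 0"
    and x: "x1^2+x2^2 > 0" and c: "c \<noteq> 0"
  shows "Complex ((norm ((c*x1) *\<^sub>R (x1 *\<^sub>R p + x2 *\<^sub>R q)))^2 - (norm ((c*x2) *\<^sub>R (x1 *\<^sub>R p + x2 *\<^sub>R q)))^2)
     (2 * (((c*x1) *\<^sub>R (x1 *\<^sub>R p + x2 *\<^sub>R q)) \<bullet> ((c*x2) *\<^sub>R (x1 *\<^sub>R p + x2 *\<^sub>R q))))
   = Complex ((c^2*R*(x1^2+x2^2))*(x1^2-x2^2)) ((c^2*R*(x1^2+x2^2))*(2*x1*x2))"
proof -
  have ip: "(x1 *\<^sub>R p + x2 *\<^sub>R q) \<bullet> (x1 *\<^sub>R p + x2 *\<^sub>R q) = R * (x1^2 + x2^2)"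
    using o by (simp add: inner_add_left inner_add_right inner_commute algebra_simps power2_eq_square)
  show ?thesis unfolding power2_norm_eq_inner inner_scaleR_left inner_scaleR_right ip
    by (simp add: power2_eq_square algebra_simps)
qed




theorem mainTheorem8:
  fixes m1 m2 m3 :: real and d0 d1 d2 :: tri
  assumes "m1 > 0" "m2 > 0" "m3 > 0" "m1 + m2 + m3 = 1"
    and "max_area m1 m2 m3 d0" "d0 \<noteq> (0, 0, 0)"
    and "is_mtri m1 m2 m3 d1" "tri_collinear d1" "d1 \<noteq> (0, 0, 0)"
    and "is_mtri m1 m2 m3 d2" "tri_collinear d2" "d2 \<noteq> (0, 0, 0)"
    and "mcross m1 m2 m3 d0 d1 = 0" "mcross m1 m2 m3 d0 d2 = 0"
  shows "line_angle d1 d2 = eq_shape_dist m1 m2 m3 d1 d2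
       \<and> line_angle d1 d2 = circ_diff (longitude m1 m2 m3 d1) (longitude m1 m2 m3 d2) / 2"
proof -
  note pos = assms(1,2,3) and sum1 = assms(4)
  note TP = T_props[OF pos sum1]
  note cf = coefs[OF pos sum1]
  define S where "S = sqrt(m1*m2/(m1+m2)) * sqrt((m1+m2)*m3)"
  have S0: "S > 0" unfolding S_def using cf(5,6) by simp
  have mt0: "is_mtri m1 m2 m3 d0" using assms(5) unfolding max_area_def by blast
  define p where "p = jac1 m1 m2 m3 d0"
  define q where "q = jac2 m1 m2 m3 d0"
  have d0r: "d0 = Tm m1 m2 m3 p q" unfolding p_def q_def by (rule T_rep[OF pos sum1 mt0])
  have pq0: "p \<noteq> 0 \<or> q \<noteq> 0" using assms(6) d0r Tm_zero by auto
  define I where "I = (norm p)^2 + (norm q)^2"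
  have I0: "I > 0" unfolding I_def using pq0 by (auto simp: add_pos_nonneg add_nonneg_pos)
  define r where "r = sqrt (I/2)"
  have rr: "r^2 = I/2" unfolding r_def using I0 by simp
  define Y where "Y = Tm m1 m2 m3 (r *\<^sub>R axis 1 1) (r *\<^sub>R axis 2 1)"
  have "is_mtri m1 m2 m3 Y" unfolding Y_def by (rule TP(1))
  moreover have "inertia m1 m2 m3 Y = inertia m1 m2 m3 d0"
    unfolding Y_def TP(4) d0r by (simp add: rr I_def[symmetric])
  ultimately have "tri_area Y \<le> tri_area d0" using assms(5) unfolding max_area_def by blast
  moreover have "tri_area Y = (I/2) / (2*S)"
    unfolding Y_def TP(6) S_def[symmetric]
    by (simp add: cross_mult_left cross_mult_right cross_basis rr[symmetric] power2_eq_square)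
  moreover have "tri_area d0 = norm (cross3 p q) / (2*S)" unfolding d0r TP(6) S_def ..
  ultimately have "(I/2) / (2*S) \<le> norm (cross3 p q) / (2*S)" by simp
  then have ineq: "I/2 \<le> norm (cross3 p q)" using S0 
    by (metis divide_le_cancel mult_pos_pos zero_less_numeral order_less_asym)
  have ncd: "(norm (cross3 p q))^2 + (p \<bullet> q)^2 = (norm p * norm q)^2" by (rule norm_cross_dot)
  have "(I/2)^2 \<le> (norm (cross3 p q))^2" using ineq I0 by (intro power_mono) auto
  then have sq: "((norm p)^2 - (norm q)^2)^2 + 4 * (p \<bullet> q)^2 \<le> 0" using ncd unfolding I_def
    by (simp add: power2_eq_square algebra_simps)
  have z1: "0 \<le> ((norm p)^2 - (norm q)^2)^2" and z2: "0 \<le> (p \<bullet> q)^2" by simp_all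
  have "((norm p)^2 - (norm q)^2)^2 = 0" using sq z1 z2 by linarith
  then have eqn: "(norm p)^2 = (norm q)^2" by simp
  have "(p \<bullet> q)^2 = 0" using sq z1 z2 by linarith
  then have orth: "p \<bullet> q = 0" by simp
  define R where "R = p \<bullet> p"
  have o: "p \<bullet> q = 0" "p \<bullet> p = R" "q \<bullet> q = R" "R > 0"
    using orth eqn I0 unfolding R_def I_def by (auto simp: power2_norm_eq_inner)
  obtain x1 x2 c where X: "x1^2+x2^2 > 0" "c \<noteq> 0"
     "jac1 m1 m2 m3 d1 = (c*x1) *\<^sub>R (x1 *\<^sub>R p + x2 *\<^sub>R q)"
     "jac2 m1 m2 m3 d1 = (c*x2) *\<^sub>R (x1 *\<^sub>R p + x2 *\<^sub>R q)"
     "\<forall>w\<in>span (tri_points d1). \<exists>k. w = k *\<^sub>R (x1 *\<^sub>R p + x2 *\<^sub>R q)"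
     "\<exists>w. w \<in> span (tri_points d1) \<and> w \<noteq> 0"
    using per_tri[OF pos sum1 o assms(7,8,9)] assms(13) d0r by blast
  obtain y1 y2 c' where Yy: "y1^2+y2^2 > 0" "c' \<noteq> 0"
     "jac1 m1 m2 m3 d2 = (c'*y1) *\<^sub>R (y1 *\<^sub>R p + y2 *\<^sub>R q)"
     "jac2 m1 m2 m3 d2 = (c'*y2) *\<^sub>R (y1 *\<^sub>R p + y2 *\<^sub>R q)"
     "\<forall>w\<in>span (tri_points d2). \<exists>k. w = k *\<^sub>R (y1 *\<^sub>R p + y2 *\<^sub>R q)"
     "\<exists>w. w \<in> span (tri_points d2) \<and> w \<noteq> 0"
    using per_tri[OF pos sum1 o assms(10,11,12)] assms(14) d0r by blast
  define u where "u = (SOME u. u \<in> span (tri_points d1) \<and> u \<noteq> 0)"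
  define v where "v = (SOME v. v \<in> span (tri_points d2) \<and> v \<noteq> 0)"
  have u: "u \<in> span (tri_points d1) \<and> u \<noteq> 0" unfolding u_def using X(6) by (rule someI_ex)
  have v: "v \<in> span (tri_points d2) \<and> v \<noteq> 0" unfolding v_def using Yy(6) by (rule someI_ex)
  obtain k1 where k1: "u = k1 *\<^sub>R (x1 *\<^sub>R p + x2 *\<^sub>R q)" using X(5) u by blast
  obtain k2 where k2: "v = k2 *\<^sub>R (y1 *\<^sub>R p + y2 *\<^sub>R q)" using Yy(5) v by blast
  have k10: "k1 \<noteq> 0" using u k1 by auto
  have k20: "k2 \<noteq> 0" using v k2 by auto
  have la: "line_angle d1 d2 = arccos \<bar>(x1*y1 + x2*y2) / (sqrt (x1^2+x2^2) * sqrt (y1^2+y2^2))\<bar>"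
    unfolding line_angle_def Let_def u_def[symmetric] v_def[symmetric] k1 k2
    using angle_eq[OF o X(1) Yy(1) k10 k20] by simp
  have h1: "hopf_eq m1 m2 m3 d1 = Complex ((c^2*R*(x1^2+x2^2))*(x1^2-x2^2)) ((c^2*R*(x1^2+x2^2))*(2*x1*x2))"
    unfolding hopf_eq_def X(3,4) by (rule hopf_form[OF o X(1,2)])
  have h2: "hopf_eq m1 m2 m3 d2 = Complex ((c'^2*R*(y1^2+y2^2))*(y1^2-y2^2)) ((c'^2*R*(y1^2+y2^2))*(2*y1*y2))"
    unfolding hopf_eq_def Yy(3,4) by (rule hopf_form[OF o Yy(1,2)])
  have K: "c^2*R*(x1^2+x2^2) > 0" "c'^2*R*(y1^2+y2^2) > 0" using X(1,2) Yy(1,2) o(4) by simp_all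
  note ft = final_trig[OF X(1) Yy(1) K h1 h2]
  show ?thesis unfolding la eq_shape_dist_def longitude_def Let_def using ft by simp
qed


end
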